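(* A graph is isomorphic to $KB(G)$ for some bipartite graph $G$ if and only if it is isomorphic to $H^2$ for some IIC-comparability graph $H$. That is, $KB(\text{bipartite})=(\text{IIC-comparability})^2$.
   Context: All graphs are finite and simple. A biclique of a graph $G$ is a set $P\subseteq V(G)$ such that the induced subgraph $G[P]$ is a complete bipartite graph with both parts nonempty, and $P$ is inclusion-maximal with this property. The biclique graph $KB(G)$ has the set of bicliques of $G$ as vertex set, two distinct bicliques being adjacent iff they intersect. For a graph $H$, the square $H^2$ has vertex set $V(H)$, two distinct vertices being adjacent iff their distance in $H$ is at most $2$. For a poset $\mathcal{P}=(C,\le)$ and $x\in C$, let $I^-_{\mathcal{P}}(x)=\{y\in C: y\le x\}$ and $I^+_{\mathcal{P}}(x)=\{y\in C: x\le y\}$; $\mathcal{P}$ is interval intersection closed (IIC) if for all $u,v\in C$: whenever $I^-_{\mathcal{P}}(u)\cap I^-_{\mathcal{P}}(v)\neq\emptyset$ there is $w\in C$ with $I^-_{\mathcal{P}}(w)=I^-_{\mathcal{P}}(u)\cap I^-_{\mathcal{P}}(v)$, and whenever $I^+_{\mathcal{P}}(u)\cap I^+_{\mathcal{P}}(v)\neq\emptyset$ there is $w\in C$ with $I^+_{\mathcal{P}}(w)=I^+_{\mathcal{P}}(u)\cap I^+_{\mathcal{P}}(v)$. The comparability graph of a poset $(C,\le)$ has vertex set $C$, two distinct elements adjacent iff they are comparable. A graph is IIC-comparability if it is the comparability graph of some (finite) IIC poset. *)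

theory Defs
  imports Main
begin

text \<open>A finite simple graph: vertex set and a symmetric irreflexive edge relation
  (as a set of ordered pairs) on the vertex set.\<close>
type_synonym 'a ugraph = "'a set \<times> ('a \<times> 'a) set"

definition verts :: "'a ugraph \<Rightarrow> 'a set" where "verts G = fst G"
definition edges :: "'a ugraph \<Rightarrow> ('a \<times> 'a) set" where "edges G = snd G"
definition adj :: "'a ugraph \<Rightarrow> 'a \<Rightarrow> 'a \<Rightarrow> bool" where "adj G x y \<longleftrightarrow> (x, y) \<in> edges G"

definition wf_graph :: "'a ugraph \<Rightarrow> bool" where
  "wf_graph G \<longleftrightarrow> finite (verts G) \<and> edges G \<subseteq> verts G \<times> verts G
     \<and> (\<forall>x y. adj G x y \<longrightarrow> adj G y x) \<and> (\<forall>x. \<not> adj G x x)"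

definition bipartite :: "'a ugraph \<Rightarrow> bool" where
  "bipartite G \<longleftrightarrow> (\<exists>A B. A \<inter> B = {} \<and> A \<union> B = verts G
     \<and> (\<forall>x y. adj G x y \<longrightarrow> (x \<in> A \<and> y \<in> B) \<or> (x \<in> B \<and> y \<in> A)))"

definition complete_bip_set :: "'a ugraph \<Rightarrow> 'a set \<Rightarrow> bool" where
  "complete_bip_set G P \<longleftrightarrow> P \<subseteq> verts G \<and> (\<exists>X Y. X \<noteq> {} \<and> Y \<noteq> {} \<and> X \<inter> Y = {} \<and> X \<union> Y = P
     \<and> (\<forall>x\<in>X. \<forall>y\<in>Y. adj G x y)
     \<and> (\<forall>x\<in>X. \<forall>x'\<in>X. \<not> adj G x x')
     \<and> (\<forall>y\<in>Y. \<forall>y'\<in>Y. \<not> adj G y y'))"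

definition biclique :: "'a ugraph \<Rightarrow> 'a set \<Rightarrow> bool" where
  "biclique G P \<longleftrightarrow> complete_bip_set G P \<and> (\<forall>Q. complete_bip_set G Q \<and> P \<subseteq> Q \<longrightarrow> Q = P)"

definition KB :: "'a ugraph \<Rightarrow> 'a set ugraph" where
  "KB G = ({P. biclique G P},
           {(P, Q). biclique G P \<and> biclique G Q \<and> P \<noteq> Q \<and> P \<inter> Q \<noteq> {}})"

definition square :: "'a ugraph \<Rightarrow> 'a ugraph" where
  "square H = (verts H,
     {(x, y). x \<in> verts H \<and> y \<in> verts H \<and> x \<noteq> y \<and>
        (adj H x y \<or> (\<exists>z \<in> verts H. adj H x z \<and> adj H z y))})"

definition graph_iso :: "'a ugraph \<Rightarrow> 'b ugraph \<Rightarrow> bool" where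
  "graph_iso G H \<longleftrightarrow> (\<exists>f. bij_betw f (verts G) (verts H) \<and>
     (\<forall>x\<in>verts G. \<forall>y\<in>verts G. adj G x y \<longleftrightarrow> adj H (f x) (f y)))"

definition finite_poset :: "'a set \<Rightarrow> ('a \<Rightarrow> 'a \<Rightarrow> bool) \<Rightarrow> bool" where
  "finite_poset C le \<longleftrightarrow> finite C
     \<and> (\<forall>x y. le x y \<longrightarrow> x \<in> C \<and> y \<in> C)
     \<and> (\<forall>x\<in>C. le x x)
     \<and> (\<forall>x y. le x y \<and> le y x \<longrightarrow> x = y)
     \<and> (\<forall>x y z. le x y \<and> le y z \<longrightarrow> le x z)"

definition down_int :: "'a set \<Rightarrow> ('a \<Rightarrow> 'a \<Rightarrow> bool) \<Rightarrow> 'a \<Rightarrow> 'a set" where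
  "down_int C le x = {y \<in> C. le y x}"

definition up_int :: "'a set \<Rightarrow> ('a \<Rightarrow> 'a \<Rightarrow> bool) \<Rightarrow> 'a \<Rightarrow> 'a set" where
  "up_int C le x = {y \<in> C. le x y}"

definition IIC :: "'a set \<Rightarrow> ('a \<Rightarrow> 'a \<Rightarrow> bool) \<Rightarrow> bool" where
  "IIC C le \<longleftrightarrow> (\<forall>u\<in>C. \<forall>v\<in>C.
     (down_int C le u \<inter> down_int C le v \<noteq> {} \<longrightarrow>
        (\<exists>w\<in>C. down_int C le w = down_int C le u \<inter> down_int C le v)) \<and>
     (up_int C le u \<inter> up_int C le v \<noteq> {} \<longrightarrow>
        (\<exists>w\<in>C. up_int C le w = up_int C le u \<inter> up_int C le v)))"

definition comparability_graph :: "'a set \<Rightarrow> ('a \<Rightarrow> 'a \<Rightarrow> bool) \<Rightarrow> 'a ugraph" where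
  "comparability_graph C le = (C, {(x, y). x \<in> C \<and> y \<in> C \<and> x \<noteq> y \<and> (le x y \<or> le y x)})"

definition IIC_comparability :: "'a ugraph \<Rightarrow> bool" where
  "IIC_comparability H \<longleftrightarrow> (\<exists>le. finite_poset (verts H) le \<and> IIC (verts H) le
     \<and> H = comparability_graph (verts H) le)"

end

theory Submission
  imports Defs
begin

lemma graph_iso_trans:
  assumes "graph_iso G H" "graph_iso H K" shows "graph_iso G K"
proof -
  obtain f where f: "bij_betw f (verts G) (verts H)"
    "\<forall>x\<in>verts G. \<forall>y\<in>verts G. adj G x y \<longleftrightarrow> adj H (f x) (f y)"
    using assms(1) unfolding graph_iso_def by blast
  obtain g where g: "bij_betw g (verts H) (verts K)"
    "\<forall>x\<in>verts H. \<forall>y\<in>verts H. adj H x y \<longleftrightarrow> adj K (g x) (g y)"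
    using assms(2) unfolding graph_iso_def by blast
  have "bij_betw (g \<circ> f) (verts G) (verts K)" using f(1) g(1) by (rule bij_betw_trans)
  moreover have "\<forall>x\<in>verts G. \<forall>y\<in>verts G. adj G x y \<longleftrightarrow> adj K ((g\<circ>f) x) ((g\<circ>f) y)"
    using f g bij_betw_apply[OF f(1)] by simp
  ultimately show ?thesis unfolding graph_iso_def by blast
qed

lemma graph_iso_sym:
  assumes "graph_iso G H" shows "graph_iso H G"
proof -
  obtain f where f: "bij_betw f (verts G) (verts H)"
    "\<forall>x\<in>verts G. \<forall>y\<in>verts G. adj G x y \<longleftrightarrow> adj H (f x) (f y)"
    using assms(1) unfolding graph_iso_def by blast
  let ?g = "inv_into (verts G) f"
  have g: "bij_betw ?g (verts H) (verts G)" using f(1) by (rule bij_betw_inv_into)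
  have "\<forall>x\<in>verts H. \<forall>y\<in>verts H. adj H x y \<longleftrightarrow> adj G (?g x) (?g y)"
  proof (intro ballI)
    fix x y assume xy: "x \<in> verts H" "y \<in> verts H"
    have "f (?g x) = x" "f (?g y) = y" using xy f(1) by (auto simp: bij_betw_def f_inv_into_f)
    moreover have "?g x \<in> verts G" "?g y \<in> verts G" using xy g by (auto simp: bij_betw_apply)
    ultimately show "adj H x y \<longleftrightarrow> adj G (?g x) (?g y)" using f(2) by metis
  qed
  with g show ?thesis unfolding graph_iso_def by blast
qed

lemma adj_comp: "adj (comparability_graph C le) x y \<longleftrightarrow> x \<in> C \<and> y \<in> C \<and> x \<noteq> y \<and> (le x y \<or> le y x)"
  by (simp add: adj_def edges_def comparability_graph_def)

lemma verts_comp[simp]: "verts (comparability_graph C le) = C"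
  by (simp add: verts_def comparability_graph_def)

lemma verts_square[simp]: "verts (square H) = verts H"
  by (simp add: verts_def square_def)

lemma adj_square: "adj (square H) x y \<longleftrightarrow> x \<in> verts H \<and> y \<in> verts H \<and> x \<noteq> y \<and>
        (adj H x y \<or> (\<exists>z \<in> verts H. adj H x z \<and> adj H z y))"
  by (simp add: adj_def edges_def square_def verts_def)

lemma wf_comp: "finite C \<Longrightarrow> (\<forall>x y. le x y \<longrightarrow> x \<in> C \<and> y \<in> C) \<Longrightarrow> wf_graph (comparability_graph C le)"
  unfolding wf_graph_def by (auto simp: adj_comp) (auto simp: edges_def comparability_graph_def)

lemma SQ:
  assumes P: "finite_poset C le" and c: "c \<in> C" and d: "d \<in> C"
  shows "adj (square (comparability_graph C le)) c d \<longleftrightarrow> c \<noteq> d \<and>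
     (down_int C le c \<inter> down_int C le d \<noteq> {} \<or> up_int C le c \<inter> up_int C le d \<noteq> {})"
proof -
  have refl: "\<And>x. x \<in> C \<Longrightarrow> le x x" and tr: "\<And>x y z. le x y \<Longrightarrow> le y z \<Longrightarrow> le x z"
    and inC: "\<And>x y. le x y \<Longrightarrow> x \<in> C \<and> y \<in> C"
    using P unfolding finite_poset_def by blast+
  show ?thesis
  proof
    assume "adj (square (comparability_graph C le)) c d"
    hence ne: "c \<noteq> d" and h: "(c \<in> C \<and> d \<in> C \<and> (le c d \<or> le d c)) \<or>
       (\<exists>z\<in>C. z \<noteq> c \<and> z \<noteq> d \<and> (le c z \<or> le z c) \<and> (le z d \<or> le d z))"
      by (auto simp: adj_square adj_comp)
    have "down_int C le c \<inter> down_int C le d \<noteq> {} \<or> up_int C le c \<inter> up_int C le d \<noteq> {}"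
    proof -
      have "\<exists>z\<in>C. (le z c \<and> le z d) \<or> (le c z \<and> le d z)"
        using h
      proof
        assume "c \<in> C \<and> d \<in> C \<and> (le c d \<or> le d c)"
        thus ?thesis using refl by blast
      next
        assume "\<exists>z\<in>C. z \<noteq> c \<and> z \<noteq> d \<and> (le c z \<or> le z c) \<and> (le z d \<or> le d z)"
        then obtain z where z: "z \<in> C" "le c z \<or> le z c" "le z d \<or> le d z" by blast
        show ?thesis
        proof (cases "le c z")
          case True
          show ?thesis
          proof (cases "le z d")
            case True
            with \<open>le c z\<close> have "le c d" by (rule tr)
            thus ?thesis using c refl by blast
          next
            case False thus ?thesis using z \<open>le c z\<close> by blast
          qed
        next
          case False
          hence "le z c" using z by blast
          show ?thesis
          proof (cases "le z d")
            case True thus ?thesis using z \<open>le z c\<close> by blast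
          next
            case False
            hence "le d z" using z by blast
            hence "le d c" using \<open>le z c\<close> by (rule tr)
            thus ?thesis using d refl by blast
          qed
        qed
      qed
      thus ?thesis by (auto simp: down_int_def up_int_def)
    qed
    with ne show "c \<noteq> d \<and> (down_int C le c \<inter> down_int C le d \<noteq> {} \<or> up_int C le c \<inter> up_int C le d \<noteq> {})" by blast
  next
    assume R: "c \<noteq> d \<and> (down_int C le c \<inter> down_int C le d \<noteq> {} \<or> up_int C le c \<inter> up_int C le d \<noteq> {})"
    then obtain z where "z \<in> C" "(le z c \<and> le z d) \<or> (le c z \<and> le d z)"
      by (auto simp: down_int_def up_int_def)
    then show "adj (square (comparability_graph C le)) c d"
      using R c d by (auto simp: adj_square adj_comp)
  qed
qed

definition tle :: "'b set \<Rightarrow> ('b \<Rightarrow> 'b \<Rightarrow> bool) \<Rightarrow> ('b \<Rightarrow> 'c) \<Rightarrow> 'c \<Rightarrow> 'c \<Rightarrow> bool" where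
  "tle C le f x y \<longleftrightarrow> x \<in> f ` C \<and> y \<in> f ` C \<and> le (inv_into C f x) (inv_into C f y)"

lemma tle_f: "inj_on f C \<Longrightarrow> a \<in> C \<Longrightarrow> b \<in> C \<Longrightarrow> tle C le f (f a) (f b) \<longleftrightarrow> le a b"
  by (simp add: tle_def)

lemma down_tle: assumes "inj_on f C" "finite_poset C le" "c \<in> C"
  shows "down_int (f ` C) (tle C le f) (f c) = f ` down_int C le c"
proof
  show "down_int (f ` C) (tle C le f) (f c) \<subseteq> f ` down_int C le c"
    using assms by (auto simp: down_int_def tle_def)
  show "f ` down_int C le c \<subseteq> down_int (f ` C) (tle C le f) (f c)"
    using assms by (auto simp: down_int_def tle_def)
qed

lemma up_tle: assumes "inj_on f C" "finite_poset C le" "c \<in> C"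
  shows "up_int (f ` C) (tle C le f) (f c) = f ` up_int C le c"
proof
  show "up_int (f ` C) (tle C le f) (f c) \<subseteq> f ` up_int C le c"
    using assms by (auto simp: up_int_def tle_def)
  show "f ` up_int C le c \<subseteq> up_int (f ` C) (tle C le f) (f c)"
    using assms by (auto simp: up_int_def tle_def)
qed

lemma poset_tle: assumes "inj_on f C" "finite_poset C le"
  shows "finite_poset (f ` C) (tle C le f)"
proof -
  have fin: "finite C" and inC: "\<And>x y. le x y \<Longrightarrow> x \<in> C \<and> y \<in> C"
    and refl: "\<And>x. x \<in> C \<Longrightarrow> le x x" and anti: "\<And>x y. le x y \<Longrightarrow> le y x \<Longrightarrow> x = y"
    and tr: "\<And>x y z. le x y \<Longrightarrow> le y z \<Longrightarrow> le x z"
    using assms(2) unfolding finite_poset_def by blast+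
  have "finite (f ` C)" using fin by simp
  moreover have "\<forall>x y. tle C le f x y \<longrightarrow> x \<in> f ` C \<and> y \<in> f ` C" by (simp add: tle_def)
  moreover have "\<forall>x\<in>f ` C. tle C le f x x" using refl assms(1) by (auto simp: tle_def)
  moreover have "\<forall>x y. tle C le f x y \<and> tle C le f y x \<longrightarrow> x = y"
  proof (intro allI impI)
    fix x y assume "tle C le f x y \<and> tle C le f y x"
    hence "x \<in> f ` C" "y \<in> f ` C" "inv_into C f x = inv_into C f y"
      using anti unfolding tle_def by blast+
    thus "x = y" by (metis f_inv_into_f)
  qed
  moreover have "\<forall>x y z. tle C le f x y \<and> tle C le f y z \<longrightarrow> tle C le f x z"
    unfolding tle_def using tr by blast
  ultimately show ?thesis unfolding finite_poset_def by blast
qed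

lemma IIC_tle: assumes inj: "inj_on f C" and P: "finite_poset C le" and I: "IIC C le"
  shows "IIC (f ` C) (tle C le f)"
  unfolding IIC_def
proof (intro ballI conjI impI)
  fix u v assume "u \<in> f ` C" "v \<in> f ` C"
  then obtain a b where ab: "a \<in> C" "b \<in> C" "u = f a" "v = f b" by blast
  have Iab: "(down_int C le a \<inter> down_int C le b \<noteq> {} \<longrightarrow>
        (\<exists>w\<in>C. down_int C le w = down_int C le a \<inter> down_int C le b)) \<and>
     (up_int C le a \<inter> up_int C le b \<noteq> {} \<longrightarrow>
        (\<exists>w\<in>C. up_int C le w = up_int C le a \<inter> up_int C le b))"
    using bspec[OF bspec[OF I[unfolded IIC_def] ab(1)] ab(2)] .
  have sd: "down_int C le a \<subseteq> C" "down_int C le b \<subseteq> C" "up_int C le a \<subseteq> C" "up_int C le b \<subseteq> C"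
    by (auto simp: down_int_def up_int_def)
  have du: "down_int (f ` C) (tle C le f) u = f ` down_int C le a"
    unfolding ab(3) by (rule down_tle[OF inj P ab(1)])
  have dv: "down_int (f ` C) (tle C le f) v = f ` down_int C le b"
    unfolding ab(4) by (rule down_tle[OF inj P ab(2)])
  have uu: "up_int (f ` C) (tle C le f) u = f ` up_int C le a"
    unfolding ab(3) by (rule up_tle[OF inj P ab(1)])
  have uv: "up_int (f ` C) (tle C le f) v = f ` up_int C le b"
    unfolding ab(4) by (rule up_tle[OF inj P ab(2)])
  have di: "down_int (f ` C) (tle C le f) u \<inter> down_int (f ` C) (tle C le f) v = f ` (down_int C le a \<inter> down_int C le b)"
    unfolding du dv by (rule inj_on_image_Int[OF inj sd(1,2), symmetric])
  have ui: "up_int (f ` C) (tle C le f) u \<inter> up_int (f ` C) (tle C le f) v = f ` (up_int C le a \<inter> up_int C le b)"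
    unfolding uu uv by (rule inj_on_image_Int[OF inj sd(3,4), symmetric])
  {
    assume "down_int (f ` C) (tle C le f) u \<inter> down_int (f ` C) (tle C le f) v \<noteq> {}"
    hence "down_int C le a \<inter> down_int C le b \<noteq> {}" unfolding di by blast
    then obtain w where w: "w \<in> C" "down_int C le w = down_int C le a \<inter> down_int C le b"
      using Iab by blast
    have "down_int (f ` C) (tle C le f) (f w) = f ` down_int C le w" by (rule down_tle[OF inj P w(1)])
    with w di show "\<exists>w\<in>f ` C. down_int (f ` C) (tle C le f) w = down_int (f ` C) (tle C le f) u \<inter> down_int (f ` C) (tle C le f) v"
      by (metis imageI)
  }
  {
    assume "up_int (f ` C) (tle C le f) u \<inter> up_int (f ` C) (tle C le f) v \<noteq> {}"
    hence "up_int C le a \<inter> up_int C le b \<noteq> {}" unfolding ui by blast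
    then obtain w where w: "w \<in> C" "up_int C le w = up_int C le a \<inter> up_int C le b"
      using Iab by blast
    have "up_int (f ` C) (tle C le f) (f w) = f ` up_int C le w" by (rule up_tle[OF inj P w(1)])
    with w ui show "\<exists>w\<in>f ` C. up_int (f ` C) (tle C le f) w = up_int (f ` C) (tle C le f) u \<inter> up_int (f ` C) (tle C le f) v"
      by (metis imageI)
  }
qed

definition bp :: "'a ugraph \<Rightarrow> 'a set \<Rightarrow> 'a set \<Rightarrow> bool" where
  "bp G A B \<longleftrightarrow> A \<inter> B = {} \<and> A \<union> B = verts G \<and> (\<forall>x y. adj G x y \<longrightarrow> (x \<in> A \<and> y \<in> B) \<or> (x \<in> B \<and> y \<in> A))"

definition cn :: "'a ugraph \<Rightarrow> 'a set \<Rightarrow> 'a set \<Rightarrow> 'a set" where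
  "cn G S T = {y \<in> T. \<forall>x\<in>S. adj G x y}"

lemma bp_sym: "bp G A B \<Longrightarrow> bp G B A"
  unfolding bp_def by blast

lemma wf_sym: "wf_graph G \<Longrightarrow> adj G x y \<Longrightarrow> adj G y x"
  unfolding wf_graph_def by blast

lemma cbs_AB:
  assumes wf: "wf_graph G" and bp: "bp G A B" and Q: "complete_bip_set G Q"
  shows "Q \<subseteq> A \<union> B \<and> Q \<inter> A \<noteq> {} \<and> Q \<inter> B \<noteq> {} \<and> (\<forall>a\<in>Q \<inter> A. \<forall>b\<in>Q \<inter> B. adj G a b)"
proof -
  have AB: "A \<inter> B = {}" "A \<union> B = verts G" and ad: "\<And>x y. adj G x y \<Longrightarrow> (x \<in> A \<and> y \<in> B) \<or> (x \<in> B \<and> y \<in> A)"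
    using bp unfolding bp_def by blast+
  obtain X Y where XY: "Q \<subseteq> verts G" "X \<noteq> {}" "Y \<noteq> {}" "X \<inter> Y = {}" "X \<union> Y = Q"
     "\<forall>x\<in>X. \<forall>y\<in>Y. adj G x y"
    using Q unfolding complete_bip_set_def by blast
  obtain x y where xy: "x \<in> X" "y \<in> Y" using XY by blast
  hence axy: "adj G x y" using XY by blast
  have case1: "Q \<inter> A \<noteq> {} \<and> Q \<inter> B \<noteq> {} \<and> (\<forall>a\<in>Q \<inter> A. \<forall>b\<in>Q \<inter> B. adj G a b)"
    if A1: "A1 \<inter> B1 = {}" and ad1: "\<And>x y. adj G x y \<Longrightarrow> (x \<in> A1 \<and> y \<in> B1) \<or> (x \<in> B1 \<and> y \<in> A1)"
      and "x \<in> A1" "y \<in> B1" and eq: "{A1, B1} = {A, B}" for A1 B1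
  proof -
    have XA: "X \<subseteq> A1"
    proof
      fix x' assume "x' \<in> X" hence "adj G x' y" using XY xy by blast
      thus "x' \<in> A1" using ad1 \<open>y \<in> B1\<close> A1 by blast
    qed
    have YB: "Y \<subseteq> B1"
    proof
      fix y' assume "y' \<in> Y" hence "adj G x y'" using XY xy by blast
      thus "y' \<in> B1" using ad1 \<open>x \<in> A1\<close> A1 by blast
    qed
    have QA: "Q \<inter> A1 = X" "Q \<inter> B1 = Y" using XA YB A1 XY by blast+
    have cr: "\<forall>a\<in>Q \<inter> A1. \<forall>b\<in>Q \<inter> B1. adj G a b" using QA XY by blast
    have "A1 = A \<and> B1 = B \<or> A1 = B \<and> B1 = A" using eq AB XY XA YB by (metis doubleton_eq_iff)
    thus ?thesis
    proof
      assume "A1 = A \<and> B1 = B" thus ?thesis using QA cr XY by blast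
    next
      assume h: "A1 = B \<and> B1 = A"
      have "\<forall>a\<in>Q \<inter> A. \<forall>b\<in>Q \<inter> B. adj G a b" using h cr wf_sym[OF wf] by blast
      thus ?thesis using QA h XY by blast
    qed
  qed
  have "x \<in> A \<and> y \<in> B \<or> x \<in> B \<and> y \<in> A" using ad axy .
  hence "Q \<inter> A \<noteq> {} \<and> Q \<inter> B \<noteq> {} \<and> (\<forall>a\<in>Q \<inter> A. \<forall>b\<in>Q \<inter> B. adj G a b)"
  proof
    assume "x \<in> A \<and> y \<in> B" thus ?thesis using case1[of A B] AB ad by blast
  next
    assume "x \<in> B \<and> y \<in> A" thus ?thesis using case1[of B A] AB ad by blast
  qed
  moreover have "Q \<subseteq> A \<union> B" using XY AB by blast
  ultimately show ?thesis by blast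
qed

lemma cbs_intro:
  assumes wf: "wf_graph G" and bp: "bp G A B" and "S \<subseteq> A" "T \<subseteq> B" "S \<noteq> {}" "T \<noteq> {}"
    and cr: "\<forall>a\<in>S. \<forall>b\<in>T. adj G a b"
  shows "complete_bip_set G (S \<union> T)"
proof -
  have AB: "A \<inter> B = {}" "A \<union> B = verts G" and ad: "\<And>x y. adj G x y \<Longrightarrow> (x \<in> A \<and> y \<in> B) \<or> (x \<in> B \<and> y \<in> A)"
    using bp unfolding bp_def by blast+
  have "\<forall>x\<in>S. \<forall>x'\<in>S. \<not> adj G x x'" using ad AB assms(3) by blast
  moreover have "\<forall>x\<in>T. \<forall>x'\<in>T. \<not> adj G x x'" using ad AB assms(4) by blast
  moreover have "S \<union> T \<subseteq> verts G" "S \<inter> T = {}" using AB assms(3,4) by blast+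
  ultimately show ?thesis unfolding complete_bip_set_def using assms(5,6) cr by blast
qed

lemma bic_char:
  assumes wf: "wf_graph G" and bp: "bp G A B"
  shows "biclique G P \<longleftrightarrow> P \<inter> A \<noteq> {} \<and> P \<inter> B \<noteq> {} \<and> P \<subseteq> A \<union> B
     \<and> P \<inter> B = cn G (P \<inter> A) B \<and> P \<inter> A = cn G (P \<inter> B) A"
proof
  assume b: "biclique G P"
  hence cP: "complete_bip_set G P" and mx: "\<And>Q. complete_bip_set G Q \<Longrightarrow> P \<subseteq> Q \<Longrightarrow> Q = P"
    unfolding biclique_def by blast+
  note c = cbs_AB[OF wf bp cP]
  have AB: "A \<inter> B = {}" using bp unfolding bp_def by blast
  have P1: "P \<inter> B \<subseteq> cn G (P \<inter> A) B" using c unfolding cn_def by blast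
  have P2: "P \<inter> A \<subseteq> cn G (P \<inter> B) A" using c wf_sym[OF wf] unfolding cn_def by blast
  have "complete_bip_set G ((P \<inter> A) \<union> cn G (P \<inter> A) B)"
    apply (rule cbs_intro[OF wf bp])
    using c P1 unfolding cn_def by blast+
  moreover have "P \<subseteq> (P \<inter> A) \<union> cn G (P \<inter> A) B" using c P1 by blast
  ultimately have e1: "(P \<inter> A) \<union> cn G (P \<inter> A) B = P" by (rule mx)
  have "complete_bip_set G (cn G (P \<inter> B) A \<union> (P \<inter> B))"
    apply (rule cbs_intro[OF wf bp])
    using c P2 wf_sym[OF wf] unfolding cn_def by blast+
  moreover have "P \<subseteq> cn G (P \<inter> B) A \<union> (P \<inter> B)" using c P2 by blast
  ultimately have e2: "cn G (P \<inter> B) A \<union> (P \<inter> B) = P" by (rule mx)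
  have "cn G (P \<inter> A) B \<subseteq> B" "cn G (P \<inter> B) A \<subseteq> A" unfolding cn_def by blast+
  hence "P \<inter> B = cn G (P \<inter> A) B" "P \<inter> A = cn G (P \<inter> B) A" using e1 e2 AB P1 P2 by blast+
  thus "P \<inter> A \<noteq> {} \<and> P \<inter> B \<noteq> {} \<and> P \<subseteq> A \<union> B
     \<and> P \<inter> B = cn G (P \<inter> A) B \<and> P \<inter> A = cn G (P \<inter> B) A" using c by blast
next
  assume h: "P \<inter> A \<noteq> {} \<and> P \<inter> B \<noteq> {} \<and> P \<subseteq> A \<union> B
     \<and> P \<inter> B = cn G (P \<inter> A) B \<and> P \<inter> A = cn G (P \<inter> B) A"
  have PU: "P = (P \<inter> A) \<union> (P \<inter> B)" using h by blast
  have cr: "\<forall>a\<in>P \<inter> A. \<forall>b\<in>P \<inter> B. adj G a b"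
  proof (intro ballI)
    fix a b assume "a \<in> P \<inter> A" "b \<in> P \<inter> B"
    thus "adj G a b" using h unfolding cn_def by blast
  qed
  have "complete_bip_set G ((P \<inter> A) \<union> (P \<inter> B))"
    by (rule cbs_intro[OF wf bp]) (use h cr in blast)+
  hence cP: "complete_bip_set G P" using PU by simp
  have "Q = P" if Q: "complete_bip_set G Q" "P \<subseteq> Q" for Q
  proof -
    note c = cbs_AB[OF wf bp Q(1)]
    have "Q \<inter> B \<subseteq> cn G (P \<inter> A) B" using c Q(2) unfolding cn_def by blast
    moreover have "Q \<inter> A \<subseteq> cn G (P \<inter> B) A" using c Q(2) wf_sym[OF wf] unfolding cn_def by blast
    ultimately have "Q \<subseteq> P" using h c by blast
    thus "Q = P" using Q(2) by blast
  qed
  thus "biclique G P" using cP unfolding biclique_def by blast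
qed

locale bpg = fixes G :: "'a ugraph" and A B assumes wf: "wf_graph G" and bpAB: "bp G A B"
begin

lemma swap: "bpg G B A" by (rule bpg.intro[OF wf bp_sym[OF bpAB]])

lemma cn_anti: "S \<subseteq> S' \<Longrightarrow> cn G S' T \<subseteq> cn G S T" unfolding cn_def by blast

lemma bic: assumes "biclique G P" shows "P \<inter> A \<noteq> {} \<and> P \<inter> B \<noteq> {} \<and> P \<subseteq> A \<union> B
     \<and> P \<inter> B = cn G (P \<inter> A) B \<and> P \<inter> A = cn G (P \<inter> B) A"
  using assms unfolding bic_char[OF wf bpAB] .

lemmas bic_neA = bic[THEN conjunct1]
lemmas bic_neB = bic[THEN conjunct2, THEN conjunct1]
lemmas bic_sub = bic[THEN conjunct2, THEN conjunct2, THEN conjunct1]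
lemmas bic_B = bic[THEN conjunct2, THEN conjunct2, THEN conjunct2, THEN conjunct1]
lemmas bic_A = bic[THEN conjunct2, THEN conjunct2, THEN conjunct2, THEN conjunct2]

lemma bic_U: "biclique G P \<Longrightarrow> P = (P \<inter> A) \<union> (P \<inter> B)"
  using bic_sub by blast

lemma dual1: "biclique G P \<Longrightarrow> biclique G Q \<Longrightarrow> P \<inter> A \<subseteq> Q \<inter> A \<Longrightarrow> Q \<inter> B \<subseteq> P \<inter> B"
proof -
  assume P: "biclique G P" and Q: "biclique G Q" and s: "P \<inter> A \<subseteq> Q \<inter> A"
  have "Q \<inter> B = cn G (Q \<inter> A) B" by (rule bic_B[OF Q])
  also have "\<dots> \<subseteq> cn G (P \<inter> A) B" by (rule cn_anti[OF s])
  also have "\<dots> = P \<inter> B" by (rule bic_B[OF P, symmetric])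
  finally show ?thesis .
qed

lemma eqA: "biclique G P \<Longrightarrow> biclique G Q \<Longrightarrow> P \<inter> A = Q \<inter> A \<Longrightarrow> P = Q"
proof -
  assume P: "biclique G P" and Q: "biclique G Q" and e: "P \<inter> A = Q \<inter> A"
  have "P \<inter> B = cn G (P \<inter> A) B" by (rule bic_B[OF P])
  also have "\<dots> = cn G (Q \<inter> A) B" using e by simp
  also have "\<dots> = Q \<inter> B" by (rule bic_B[OF Q, symmetric])
  finally have eB: "P \<inter> B = Q \<inter> B" .
  show "P = Q" using bic_U[OF P] bic_U[OF Q] e eB by simp
qed

lemma meet:
  assumes P: "biclique G P" and Q: "biclique G Q" and ne: "P \<inter> Q \<inter> A \<noteq> {}"
  shows "\<exists>M. biclique G M \<and> M \<inter> A \<subseteq> P \<inter> A \<and> M \<inter> A \<subseteq> Q \<inter> A \<and>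
     (\<forall>R. R \<inter> A \<subseteq> P \<inter> A \<and> R \<inter> A \<subseteq> Q \<inter> A \<longrightarrow> R \<inter> A \<subseteq> M \<inter> A)"
proof -
  have AB: "A \<inter> B = {}" using bpAB unfolding bp_def by blast
  define S0 where "S0 = P \<inter> Q \<inter> A"
  define T where "T = cn G S0 B"
  define S where "S = cn G T A"
  have sy: "\<And>x y. adj G x y \<Longrightarrow> adj G y x" using wf_sym[OF wf] .
  have S0S: "S0 \<subseteq> S"
  proof
    fix a assume a: "a \<in> S0"
    have "\<forall>b\<in>T. adj G b a"
    proof
      fix b assume "b \<in> T" hence "adj G a b" using a unfolding T_def cn_def by simp
      thus "adj G b a" by (rule sy)
    qed
    moreover have "a \<in> A" using a unfolding S0_def by simp
    ultimately show "a \<in> S" unfolding S_def cn_def by simp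
  qed
  have PT: "P \<inter> B \<subseteq> T"
  proof
    fix b assume b: "b \<in> P \<inter> B"
    hence "b \<in> cn G (P \<inter> A) B" using bic_B[OF P] by blast
    thus "b \<in> T" unfolding T_def using cn_anti[of S0 "P \<inter> A" B] unfolding S0_def by blast
  qed
  have QT: "Q \<inter> B \<subseteq> T"
  proof
    fix b assume b: "b \<in> Q \<inter> B"
    hence "b \<in> cn G (Q \<inter> A) B" using bic_B[OF Q] by blast
    thus "b \<in> T" unfolding T_def using cn_anti[of S0 "Q \<inter> A" B] unfolding S0_def by blast
  qed
  have SA: "S \<subseteq> A" "T \<subseteq> B" unfolding S_def T_def cn_def by auto
  have TS: "T = cn G S B"
  proof
    show "cn G S B \<subseteq> T" unfolding T_def using cn_anti[OF S0S] .
    show "T \<subseteq> cn G S B"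
    proof
      fix b assume b: "b \<in> T"
      have "\<forall>a\<in>S. adj G a b"
      proof
        fix a assume "a \<in> S" hence "adj G b a" using b unfolding S_def cn_def by simp
        thus "adj G a b" by (rule sy)
      qed
      thus "b \<in> cn G S B" using b SA unfolding cn_def by auto
    qed
  qed
  define M where "M = S \<union> T"
  have MA: "M \<inter> A = S" "M \<inter> B = T" using SA AB unfolding M_def by auto
  have neS: "S \<noteq> {}" using S0S ne unfolding S0_def by auto
  have neT: "T \<noteq> {}" using PT bic_neB[OF P] by auto
  have sub: "M \<subseteq> A \<union> B" using SA unfolding M_def by auto
  have bM: "biclique G M"
    unfolding bic_char[OF wf bpAB] MA
    apply (intro conjI)
        apply (rule neS)
       apply (rule neT)
      apply (rule sub)
     apply (rule TS)
    apply (rule S_def)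
    done
  have SP: "S \<subseteq> P \<inter> A" unfolding S_def using cn_anti[OF PT, of A] bic_A[OF P] by blast
  have SQ: "S \<subseteq> Q \<inter> A" unfolding S_def using cn_anti[OF QT, of A] bic_A[OF Q] by blast
  have gr: "\<forall>R. R \<inter> A \<subseteq> P \<inter> A \<and> R \<inter> A \<subseteq> Q \<inter> A \<longrightarrow> R \<inter> A \<subseteq> S"
    using S0S unfolding S0_def by auto
  show ?thesis
    apply (rule exI[of _ M])
    using bM SP SQ gr by (simp add: MA)
qed

end

lemma KB_verts: "verts (KB G) = {P. biclique G P}" by (simp add: KB_def verts_def)
lemma KB_adj: "adj (KB G) P Q \<longleftrightarrow> biclique G P \<and> biclique G Q \<and> P \<noteq> Q \<and> P \<inter> Q \<noteq> {}"
  by (simp add: KB_def adj_def edges_def)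

context bpg begin

definition leB where "leB P Q \<longleftrightarrow> biclique G P \<and> biclique G Q \<and> P \<inter> A \<subseteq> Q \<inter> A"

lemma dual: "biclique G P \<Longrightarrow> biclique G Q \<Longrightarrow> P \<inter> A \<subseteq> Q \<inter> A \<longleftrightarrow> Q \<inter> B \<subseteq> P \<inter> B"
  using dual1[of P Q] bpg.dual1[OF swap, of Q P] by blast

lemma fin_bic: "finite {P. biclique G P}"
proof (rule finite_subset)
  show "{P. biclique G P} \<subseteq> Pow (verts G)" unfolding biclique_def complete_bip_set_def by blast
  show "finite (Pow (verts G))" using wf unfolding wf_graph_def by simp
qed

lemma poset: "finite_poset {P. biclique G P} leB"
  unfolding finite_poset_def
proof (intro conjI allI impI ballI)
  show "finite {P. biclique G P}" by (rule fin_bic)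
  fix x y z
  show "leB x y \<Longrightarrow> x \<in> {P. biclique G P}" "leB x y \<Longrightarrow> y \<in> {P. biclique G P}" unfolding leB_def by simp_all
  show "leB x y \<and> leB y x \<Longrightarrow> x = y" unfolding leB_def using eqA by blast
  show "leB x y \<and> leB y z \<Longrightarrow> leB x z" unfolding leB_def by blast
next
  fix x assume "x \<in> {P. biclique G P}" thus "leB x x" unfolding leB_def by simp
qed

abbreviation "Bic \<equiv> {P. biclique G P}"

lemma down_iff: "R \<in> down_int Bic leB P \<longleftrightarrow> biclique G R \<and> biclique G P \<and> R \<inter> A \<subseteq> P \<inter> A"
  unfolding down_int_def leB_def by blast
lemma up_iff: "R \<in> up_int Bic leB P \<longleftrightarrow> biclique G R \<and> biclique G P \<and> P \<inter> A \<subseteq> R \<inter> A"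
  unfolding up_int_def leB_def by blast

lemma inter_char:
  assumes P: "biclique G P" and Q: "biclique G Q"
  shows "P \<inter> Q \<noteq> {} \<longleftrightarrow> down_int Bic leB P \<inter> down_int Bic leB Q \<noteq> {} \<or> up_int Bic leB P \<inter> up_int Bic leB Q \<noteq> {}"
proof
  assume "P \<inter> Q \<noteq> {}"
  then obtain x where x: "x \<in> P" "x \<in> Q" by blast
  have "x \<in> A \<or> x \<in> B" using x bic_sub[OF P] by blast
  thus "down_int Bic leB P \<inter> down_int Bic leB Q \<noteq> {} \<or> up_int Bic leB P \<inter> up_int Bic leB Q \<noteq> {}"
  proof
    assume "x \<in> A"
    hence "P \<inter> Q \<inter> A \<noteq> {}" using x by blast
    then obtain M where M: "biclique G M" "M \<inter> A \<subseteq> P \<inter> A" "M \<inter> A \<subseteq> Q \<inter> A"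
      using meet[OF P Q] by blast
    hence "M \<in> down_int Bic leB P \<inter> down_int Bic leB Q" using P Q by (simp add: down_iff)
    thus ?thesis by blast
  next
    assume "x \<in> B"
    hence "P \<inter> Q \<inter> B \<noteq> {}" using x by blast
    then obtain M where M: "biclique G M" "M \<inter> B \<subseteq> P \<inter> B" "M \<inter> B \<subseteq> Q \<inter> B"
      using bpg.meet[OF swap P Q] by blast
    hence "P \<inter> A \<subseteq> M \<inter> A" "Q \<inter> A \<subseteq> M \<inter> A" using dual[OF P M(1)] dual[OF Q M(1)] M(2,3) by blast+
    hence "M \<in> up_int Bic leB P \<inter> up_int Bic leB Q" using P Q M(1) by (simp add: up_iff)
    thus ?thesis by blast
  qed
next
  assume "down_int Bic leB P \<inter> down_int Bic leB Q \<noteq> {} \<or> up_int Bic leB P \<inter> up_int Bic leB Q \<noteq> {}"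
  thus "P \<inter> Q \<noteq> {}"
  proof
    assume "down_int Bic leB P \<inter> down_int Bic leB Q \<noteq> {}"
    then obtain R where R: "biclique G R" "R \<inter> A \<subseteq> P \<inter> A" "R \<inter> A \<subseteq> Q \<inter> A"
      by (auto simp: down_iff)
    thus ?thesis using bic_neA[OF R(1)] by blast
  next
    assume "up_int Bic leB P \<inter> up_int Bic leB Q \<noteq> {}"
    then obtain R where R: "biclique G R" "P \<inter> A \<subseteq> R \<inter> A" "Q \<inter> A \<subseteq> R \<inter> A"
      by (auto simp: up_iff)
    hence "R \<inter> B \<subseteq> P \<inter> B" "R \<inter> B \<subseteq> Q \<inter> B" using dual[OF P R(1)] dual[OF Q R(1)] R(2,3) by blast+
    thus ?thesis using bic_neB[OF R(1)] by blast
  qed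
qed

lemma IIC_Bic: "IIC Bic leB"
  unfolding IIC_def
proof (intro ballI conjI impI)
  fix u v assume u: "u \<in> Bic" and v: "v \<in> Bic"
  hence bu: "biclique G u" and bv: "biclique G v" by simp_all
  {
    assume "down_int Bic leB u \<inter> down_int Bic leB v \<noteq> {}"
    then obtain R where R: "biclique G R" "R \<inter> A \<subseteq> u \<inter> A" "R \<inter> A \<subseteq> v \<inter> A"
      by (auto simp: down_iff)
    hence "u \<inter> v \<inter> A \<noteq> {}" using bic_neA[OF R(1)] by blast
    then obtain M where M: "biclique G M" "M \<inter> A \<subseteq> u \<inter> A" "M \<inter> A \<subseteq> v \<inter> A"
      "\<forall>R. R \<inter> A \<subseteq> u \<inter> A \<and> R \<inter> A \<subseteq> v \<inter> A \<longrightarrow> R \<inter> A \<subseteq> M \<inter> A"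
      using meet[OF bu bv] by blast
    have "down_int Bic leB M = down_int Bic leB u \<inter> down_int Bic leB v"
    proof (rule set_eqI)
      fix R show "R \<in> down_int Bic leB M \<longleftrightarrow> R \<in> down_int Bic leB u \<inter> down_int Bic leB v"
      proof
        assume "R \<in> down_int Bic leB M"
        hence R: "biclique G R" "R \<inter> A \<subseteq> M \<inter> A" by (simp_all add: down_iff)
        have "R \<inter> A \<subseteq> u \<inter> A" using R(2) M(2) by (rule subset_trans)
        moreover have "R \<inter> A \<subseteq> v \<inter> A" using R(2) M(3) by (rule subset_trans)
        ultimately show "R \<in> down_int Bic leB u \<inter> down_int Bic leB v" using R(1) bu bv by (simp add: down_iff)
      next
        assume "R \<in> down_int Bic leB u \<inter> down_int Bic leB v"
        hence R: "biclique G R" "R \<inter> A \<subseteq> u \<inter> A" "R \<inter> A \<subseteq> v \<inter> A" by (simp_all add: down_iff)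
        hence "R \<inter> A \<subseteq> M \<inter> A" using M(4) by blast
        thus "R \<in> down_int Bic leB M" using R(1) M(1) by (simp add: down_iff)
      qed
    qed
    thus "\<exists>w\<in>Bic. down_int Bic leB w = down_int Bic leB u \<inter> down_int Bic leB v"
      using M(1) by blast
  }
  {
    assume "up_int Bic leB u \<inter> up_int Bic leB v \<noteq> {}"
    then obtain R where R: "biclique G R" "u \<inter> A \<subseteq> R \<inter> A" "v \<inter> A \<subseteq> R \<inter> A"
      by (auto simp: up_iff)
    hence "R \<inter> B \<subseteq> u \<inter> B" "R \<inter> B \<subseteq> v \<inter> B" using dual[OF bu R(1)] dual[OF bv R(1)] R(2,3) by blast+
    hence "u \<inter> v \<inter> B \<noteq> {}" using bic_neB[OF R(1)] by blast
    then obtain M where M: "biclique G M" "M \<inter> B \<subseteq> u \<inter> B" "M \<inter> B \<subseteq> v \<inter> B"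
      "\<forall>R. R \<inter> B \<subseteq> u \<inter> B \<and> R \<inter> B \<subseteq> v \<inter> B \<longrightarrow> R \<inter> B \<subseteq> M \<inter> B"
      using bpg.meet[OF swap bu bv] by blast
    have "up_int Bic leB M = up_int Bic leB u \<inter> up_int Bic leB v"
    proof (rule set_eqI)
      fix R
      show "R \<in> up_int Bic leB M \<longleftrightarrow> R \<in> up_int Bic leB u \<inter> up_int Bic leB v"
      proof
        assume "R \<in> up_int Bic leB M"
        hence R: "biclique G R" "M \<inter> A \<subseteq> R \<inter> A" by (auto simp: up_iff)
        hence "R \<inter> B \<subseteq> M \<inter> B" using dual[OF M(1) R(1)] R(2) by blast
        hence "R \<inter> B \<subseteq> u \<inter> B" "R \<inter> B \<subseteq> v \<inter> B" using M by blast+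
        hence "u \<inter> A \<subseteq> R \<inter> A" "v \<inter> A \<subseteq> R \<inter> A" using dual[OF bu R(1)] dual[OF bv R(1)] by blast+
        thus "R \<in> up_int Bic leB u \<inter> up_int Bic leB v" using R(1) bu bv by (simp add: up_iff)
      next
        assume "R \<in> up_int Bic leB u \<inter> up_int Bic leB v"
        hence R: "biclique G R" "u \<inter> A \<subseteq> R \<inter> A" "v \<inter> A \<subseteq> R \<inter> A" by (auto simp: up_iff)
        hence "R \<inter> B \<subseteq> u \<inter> B" "R \<inter> B \<subseteq> v \<inter> B" using dual[OF bu R(1)] dual[OF bv R(1)] R(2,3) by blast+
        hence "R \<inter> B \<subseteq> M \<inter> B" using M(4) by blast
        hence "M \<inter> A \<subseteq> R \<inter> A" using dual[OF M(1) R(1)] by blast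
        thus "R \<in> up_int Bic leB M" using R(1) M(1) by (simp add: up_iff)
      qed
    qed
    thus "\<exists>w\<in>Bic. up_int Bic leB w = up_int Bic leB u \<inter> up_int Bic leB v"
      using M(1) by blast
  }
qed

lemma KB_iso: "graph_iso (KB G) (square (comparability_graph Bic leB))"
  unfolding graph_iso_def
proof (intro exI[of _ id] conjI ballI)
  show "bij_betw id (verts (KB G)) (verts (square (comparability_graph Bic leB)))"
    by (simp add: KB_verts)
  fix P Q assume "P \<in> verts (KB G)" "Q \<in> verts (KB G)"
  hence P: "biclique G P" and Q: "biclique G Q" by (simp_all add: KB_verts)
  show "adj (KB G) P Q \<longleftrightarrow> adj (square (comparability_graph Bic leB)) (id P) (id Q)"
    unfolding id_def KB_adj SQ[OF poset, of P Q, simplified, OF P Q] inter_char[OF P Q]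
    using P Q by blast
qed

end

lemma tle_sq_iso:
  assumes P: "finite_poset C le" and inj: "inj_on f C"
  shows "graph_iso (square (comparability_graph C le)) (square (comparability_graph (f ` C) (tle C le f)))"
  unfolding graph_iso_def
proof (intro exI[of _ f] conjI ballI)
  show "bij_betw f (verts (square (comparability_graph C le))) (verts (square (comparability_graph (f ` C) (tle C le f))))"
    using inj by (simp add: bij_betw_imageI)
  fix c d assume "c \<in> verts (square (comparability_graph C le))" "d \<in> verts (square (comparability_graph C le))"
  hence c: "c \<in> C" and d: "d \<in> C" by simp_all
  have P': "finite_poset (f ` C) (tle C le f)" by (rule poset_tle[OF inj P])
  have sd: "down_int C le c \<subseteq> C" "down_int C le d \<subseteq> C" "up_int C le c \<subseteq> C" "up_int C le d \<subseteq> C"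
    by (auto simp: down_int_def up_int_def)
  have e1: "down_int (f ` C) (tle C le f) (f c) \<inter> down_int (f ` C) (tle C le f) (f d) = f ` (down_int C le c \<inter> down_int C le d)"
    unfolding down_tle[OF inj P c] down_tle[OF inj P d] by (rule inj_on_image_Int[OF inj sd(1,2), symmetric])
  have e2: "up_int (f ` C) (tle C le f) (f c) \<inter> up_int (f ` C) (tle C le f) (f d) = f ` (up_int C le c \<inter> up_int C le d)"
    unfolding up_tle[OF inj P c] up_tle[OF inj P d] by (rule inj_on_image_Int[OF inj sd(3,4), symmetric])
  have e3: "f c \<noteq> f d \<longleftrightarrow> c \<noteq> d" using inj c d by (auto dest: inj_onD)
  show "adj (square (comparability_graph C le)) c d \<longleftrightarrow>
        adj (square (comparability_graph (f ` C) (tle C le f))) (f c) (f d)"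
    unfolding SQ[OF P c d] SQ[OF P' imageI[OF c] imageI[OF d]] e1 e2 e3 image_is_empty ..
qed

lemma dir1:
  fixes G :: "'a ugraph"
  assumes wf: "wf_graph G" and bip: "bipartite G"
  shows "\<exists>H :: nat ugraph. wf_graph H \<and> IIC_comparability H \<and> graph_iso (KB G) (square H)"
proof -
  obtain A B where "bp G A B" using bip unfolding bipartite_def bp_def by blast
  then interpret bpg G A B using wf by (simp add: bpg_def)
  obtain f :: "'a set \<Rightarrow> nat" and n where inj: "inj_on f Bic"
    using finite_imp_inj_to_nat_seg[OF fin_bic] by blast
  define H where "H = comparability_graph (f ` Bic) (tle Bic leB f)"
  have vH: "verts H = f ` Bic" unfolding H_def by simp
  have "wf_graph H" unfolding H_def
    by (rule wf_comp) (use fin_bic in \<open>auto simp: tle_def\<close>)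
  moreover have "IIC_comparability H"
    unfolding IIC_comparability_def vH
    using poset_tle[OF inj poset] IIC_tle[OF inj poset IIC_Bic] H_def by blast
  moreover have "graph_iso (KB G) (square H)"
    unfolding H_def by (rule graph_iso_trans[OF KB_iso tle_sq_iso[OF poset inj]])
  ultimately show ?thesis by blast
qed

lemma par1[simp]: "(2 * (a::nat) = Suc (2 * b)) \<longleftrightarrow> False" by presburger
lemma par2[simp]: "(Suc (2 * (b::nat)) = 2 * a) \<longleftrightarrow> False" by presburger

definition G2 :: "nat set \<Rightarrow> (nat \<Rightarrow> nat \<Rightarrow> bool) \<Rightarrow> nat ugraph" where
  "G2 C le = ((\<lambda>c. 2 * c) ` C \<union> (\<lambda>c. Suc (2 * c)) ` C,
     {(2 * a, Suc (2 * b)) | a b. le a b} \<union> {(Suc (2 * b), 2 * a) | a b. le a b})"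

lemma G2_verts: "verts (G2 C le) = (\<lambda>c. 2 * c) ` C \<union> (\<lambda>c. Suc (2 * c)) ` C"
  by (simp add: G2_def verts_def)

lemma G2_adj: "adj (G2 C le) x y \<longleftrightarrow> (\<exists>a b. le a b \<and> x = 2 * a \<and> y = Suc (2 * b)) \<or> (\<exists>a b. le a b \<and> x = Suc (2 * b) \<and> y = 2 * a)"
  by (auto simp: G2_def adj_def edges_def)

lemma G2_adj1[simp]: "adj (G2 C le) (2 * a) (Suc (2 * b)) \<longleftrightarrow> le a b"
  by (simp add: G2_adj)
lemma G2_adj2[simp]: "adj (G2 C le) (Suc (2 * b)) (2 * a) \<longleftrightarrow> le a b"
  by (simp add: G2_adj)
lemma G2_adj3[simp]: "\<not> adj (G2 C le) (2 * a) (2 * b)" "\<not> adj (G2 C le) (Suc (2 * a)) (Suc (2 * b))"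
  by (simp_all add: G2_adj)

locale pos = fixes C :: "nat set" and le assumes P: "finite_poset C le" and I: "IIC C le"
begin

lemma fin: "finite C" and inC: "\<And>x y. le x y \<Longrightarrow> x \<in> C \<and> y \<in> C"
    and refl: "\<And>x. x \<in> C \<Longrightarrow> le x x" and anti: "\<And>x y. le x y \<Longrightarrow> le y x \<Longrightarrow> x = y"
    and tr: "\<And>x y z. le x y \<Longrightarrow> le y z \<Longrightarrow> le x z"
  using P unfolding finite_poset_def by blast+

abbreviation "EV \<equiv> (\<lambda>c::nat. 2 * c) ` C"
abbreviation "OD \<equiv> (\<lambda>c::nat. Suc (2 * c)) ` C"
abbreviation "GG \<equiv> G2 C le"

lemma wf2: "wf_graph GG"
  unfolding wf_graph_def
proof (intro conjI allI impI)
  show "finite (verts GG)" using fin by (simp add: G2_verts)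
  show "edges GG \<subseteq> verts GG \<times> verts GG"
    using inC by (auto simp: G2_def edges_def verts_def)
  fix x y assume "adj GG x y" thus "adj GG y x" by (auto simp: G2_adj)
next
  fix x show "\<not> adj GG x x" by (auto simp: G2_adj)
qed

lemma bp2: "bp GG EV OD"
  unfolding bp_def G2_verts
proof (intro conjI allI impI)
  show "EV \<inter> OD = {}" by auto
  show "EV \<union> OD = EV \<union> OD" ..
  fix x y assume "adj GG x y"
  then obtain a b where ab: "le a b" "x = 2 * a \<and> y = Suc (2 * b) \<or> x = Suc (2 * b) \<and> y = 2 * a"
    unfolding G2_adj by blast
  have "a \<in> C" "b \<in> C" using inC[OF ab(1)] by simp_all
  thus "x \<in> EV \<and> y \<in> OD \<or> x \<in> OD \<and> y \<in> EV" using ab(2) by blast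
qed

lemma bip2: "bipartite GG"
  using bp2 unfolding bp_def bipartite_def by (rule exI[of _ EV, OF exI[of _ OD]])

interpretation b: bpg GG EV OD using wf2 bp2 by (simp add: bpg_def)

lemma cn1: "cn GG ((\<lambda>c. 2 * c) ` D) OD = (\<lambda>c. Suc (2 * c)) ` {b \<in> C. \<forall>a\<in>D. le a b}"
  unfolding cn_def by auto

lemma cn2: "cn GG ((\<lambda>c. Suc (2 * c)) ` U) EV = (\<lambda>c. 2 * c) ` {a \<in> C. \<forall>b\<in>U. le a b}"
  unfolding cn_def by auto

definition phi where "phi c = (\<lambda>c. 2 * c) ` down_int C le c \<union> (\<lambda>c. Suc (2 * c)) ` up_int C le c"

lemma phiA: "phi c \<inter> EV = (\<lambda>c. 2 * c) ` down_int C le c"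
  unfolding phi_def down_int_def up_int_def by auto
lemma phiB: "phi c \<inter> OD = (\<lambda>c. Suc (2 * c)) ` up_int C le c"
  unfolding phi_def down_int_def up_int_def by auto

lemma up_eq: "c \<in> C \<Longrightarrow> {b \<in> C. \<forall>a\<in>down_int C le c. le a b} = up_int C le c"
  unfolding down_int_def up_int_def using refl tr by blast
lemma down_eq: "c \<in> C \<Longrightarrow> {a \<in> C. \<forall>b\<in>up_int C le c. le a b} = down_int C le c"
  unfolding down_int_def up_int_def using refl tr by blast

lemma phi_bic: assumes c: "c \<in> C" shows "biclique GG (phi c)"
  unfolding bic_char[OF wf2 bp2] phiA phiB
proof (intro conjI)
  show "(\<lambda>c. 2 * c) ` down_int C le c \<noteq> {}" using c refl by (auto simp: down_int_def)
  show "(\<lambda>c. Suc (2 * c)) ` up_int C le c \<noteq> {}" using c refl by (auto simp: up_int_def)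
  show "phi c \<subseteq> EV \<union> OD" unfolding phi_def down_int_def up_int_def by auto
  show "(\<lambda>c. Suc (2 * c)) ` up_int C le c = cn GG ((\<lambda>c. 2 * c) ` down_int C le c) OD"
    unfolding cn1 up_eq[OF c] ..
  show "(\<lambda>c. 2 * c) ` down_int C le c = cn GG ((\<lambda>c. Suc (2 * c)) ` up_int C le c) EV"
    unfolding cn2 down_eq[OF c] ..
qed

lemma meet_many:
  assumes "finite T" "T \<noteq> {}"
  shows "T \<subseteq> C \<Longrightarrow> {a \<in> C. \<forall>b\<in>T. le a b} \<noteq> {} \<Longrightarrow> \<exists>w\<in>C. down_int C le w = {a \<in> C. \<forall>b\<in>T. le a b}"
  using assms
proof (induction T rule: finite_ne_induct)
  case (singleton x)
  thus ?case by (auto simp: down_int_def)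
next
  case (insert x F)
  have "{a \<in> C. \<forall>b\<in>F. le a b} \<noteq> {}" using insert.prems by auto
  then obtain w' where w': "w' \<in> C" "down_int C le w' = {a \<in> C. \<forall>b\<in>F. le a b}"
    using insert.IH insert.prems by auto
  have x: "x \<in> C" using insert.prems by auto
  have eq: "down_int C le x \<inter> down_int C le w' = {a \<in> C. \<forall>b\<in>insert x F. le a b}"
    using w'(2) by (auto simp: down_int_def)
  have Ixw: "(down_int C le x \<inter> down_int C le w' \<noteq> {} \<longrightarrow>
        (\<exists>w\<in>C. down_int C le w = down_int C le x \<inter> down_int C le w'))"
    using bspec[OF bspec[OF I[unfolded IIC_def] x] w'(1)] by blast
  show ?case using Ixw insert.prems unfolding eq by blast
qed

lemma phi_surj: assumes P: "biclique GG P" shows "\<exists>w\<in>C. P = phi w"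
proof -
  define T where "T = {b \<in> C. Suc (2 * b) \<in> P}"
  have PB: "P \<inter> OD = (\<lambda>c. Suc (2 * c)) ` T" unfolding T_def by blast
  have PA: "P \<inter> EV = (\<lambda>c. 2 * c) ` {a \<in> C. \<forall>b\<in>T. le a b}"
    using b.bic_A[OF P] unfolding PB cn2 .
  have neT: "T \<noteq> {}" using b.bic_neB[OF P] unfolding PB by blast
  have finT: "finite T" using fin unfolding T_def by simp
  have subT: "T \<subseteq> C" unfolding T_def by blast
  have neA: "{a \<in> C. \<forall>b\<in>T. le a b} \<noteq> {}" using b.bic_neA[OF P] unfolding PA by blast
  obtain w where w: "w \<in> C" "down_int C le w = {a \<in> C. \<forall>b\<in>T. le a b}"
    using meet_many[OF finT neT subT neA] by blast
  have PA': "P \<inter> EV = (\<lambda>c. 2 * c) ` down_int C le w" unfolding PA w(2) ..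
  have PB': "P \<inter> OD = (\<lambda>c. Suc (2 * c)) ` up_int C le w"
    using b.bic_B[OF P] unfolding PA' cn1 up_eq[OF w(1)] .
  have "P = (P \<inter> EV) \<union> (P \<inter> OD)" by (rule b.bic_U[OF P])
  also have "\<dots> = phi w" unfolding PA' PB' phi_def ..
  finally show ?thesis using w(1) by blast
qed

lemma phi_inj: "inj_on phi C"
proof (rule inj_onI)
  fix c d assume c: "c \<in> C" and d: "d \<in> C" and e: "phi c = phi d"
  have "(\<lambda>c. 2 * c) ` down_int C le c = (\<lambda>c::nat. 2 * c) ` down_int C le d"
    using phiA[of c] phiA[of d] e by simp
  hence "down_int C le c = down_int C le d" by (simp add: inj_image_eq_iff inj_def)
  hence "le c d" "le d c" using c d refl by (auto simp: down_int_def)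
  thus "c = d" by (rule anti)
qed

lemma phi_int: "phi c \<inter> phi d \<noteq> {} \<longleftrightarrow> down_int C le c \<inter> down_int C le d \<noteq> {} \<or> up_int C le c \<inter> up_int C le d \<noteq> {}"
  unfolding phi_def by auto

lemma iso2: "graph_iso (square (comparability_graph C le)) (KB GG)"
  unfolding graph_iso_def
proof (intro exI[of _ phi] conjI ballI)
  have "phi ` C = {P. biclique GG P}" using phi_bic phi_surj by blast
  thus "bij_betw phi (verts (square (comparability_graph C le))) (verts (KB GG))"
    using phi_inj by (simp add: KB_verts bij_betw_def)
  fix c d assume "c \<in> verts (square (comparability_graph C le))" "d \<in> verts (square (comparability_graph C le))"
  hence c: "c \<in> C" and d: "d \<in> C" by simp_all
  have e3: "phi c \<noteq> phi d \<longleftrightarrow> c \<noteq> d" using phi_inj c d by (auto dest: inj_onD)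
  show "adj (square (comparability_graph C le)) c d \<longleftrightarrow> adj (KB GG) (phi c) (phi d)"
    unfolding SQ[OF P c d] KB_adj e3 phi_int using phi_bic[OF c] phi_bic[OF d] by blast
qed

end

lemma dir2:
  fixes H :: "nat ugraph"
  assumes "IIC_comparability H"
  shows "\<exists>G :: nat ugraph. wf_graph G \<and> bipartite G \<and> graph_iso (square H) (KB G)"
proof -
  obtain le where le: "finite_poset (verts H) le" "IIC (verts H) le" "H = comparability_graph (verts H) le"
    using assms unfolding IIC_comparability_def by blast
  interpret pos "verts H" le using le by (simp add: pos_def)
  show ?thesis using wf2 bip2 iso2 le(3) by metis
qed

theorem corollary6:
  fixes X :: "'a ugraph"
  assumes "wf_graph X"
  shows "(\<exists>G :: nat ugraph. wf_graph G \<and> bipartite G \<and> graph_iso X (KB G))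
     \<longleftrightarrow> (\<exists>H :: nat ugraph. wf_graph H \<and> IIC_comparability H \<and> graph_iso X (square H))"
proof
  assume "\<exists>G :: nat ugraph. wf_graph G \<and> bipartite G \<and> graph_iso X (KB G)"
  then obtain G :: "nat ugraph" where G: "wf_graph G" "bipartite G" "graph_iso X (KB G)" by blast
  obtain H :: "nat ugraph" where H: "wf_graph H" "IIC_comparability H" "graph_iso (KB G) (square H)"
    using dir1[OF G(1,2)] by blast
  show "\<exists>H :: nat ugraph. wf_graph H \<and> IIC_comparability H \<and> graph_iso X (square H)"
    using H graph_iso_trans[OF G(3) H(3)] by blast
next
  assume "\<exists>H :: nat ugraph. wf_graph H \<and> IIC_comparability H \<and> graph_iso X (square H)"
  then obtain H :: "nat ugraph" where H: "wf_graph H" "IIC_comparability H" "graph_iso X (square H)" by blast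
  obtain G :: "nat ugraph" where G: "wf_graph G" "bipartite G" "graph_iso (square H) (KB G)"
    using dir2[OF H(2)] by blast
  show "\<exists>G :: nat ugraph. wf_graph G \<and> bipartite G \<and> graph_iso X (KB G)"
    using G graph_iso_trans[OF H(3) G(3)] by blast
qed

end
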